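(* Let $G$ be a graph, $X_C \subseteq V(G)$, $z \geq 0$, and let $H$ be an $X_C$-certificate of order $z$ in $G$. Then $H$ contains a subgraph $\hat{H}$ that is an $X_C$-certificate of order $z$ in $G$ such that $\hat{H} - X_C$ has at most $z^2 |X_C|$ connected components.
   Context: $\mathrm{oct}(H)$ denotes the minimum size of a set $S\subseteq V(H)$ with $H - S$ bipartite. For $X_C \subseteq V(G)$, an $X_C$-certificate of order $z$ is a subgraph $H$ of $G$ such that $H - X_C$ is bipartite, $\mathrm{oct}(H)=|X_C|$, and each connected component $H'$ of $H$ has $|X_C\cap V(H')|\le z$. *)

theory Defs
  imports Main
begin

record 'a graph =
  verts :: "'a set"
  edges :: "'a set set"

definition wf_graph :: "'a graph \<Rightarrow> bool" where
  "wf_graph G \<longleftrightarrow> finite (verts G) \<and>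
     (\<forall>e\<in>edges G. card e = 2 \<and> e \<subseteq> verts G)"

definition subgraph :: "'a graph \<Rightarrow> 'a graph \<Rightarrow> bool" where
  "subgraph H G \<longleftrightarrow> wf_graph H \<and> verts H \<subseteq> verts G \<and> edges H \<subseteq> edges G"

definition del_verts :: "'a graph \<Rightarrow> 'a set \<Rightarrow> 'a graph" where
  "del_verts H S = \<lparr> verts = verts H - S, edges = {e \<in> edges H. e \<inter> S = {}} \<rparr>"

definition bipartite :: "'a graph \<Rightarrow> bool" where
  "bipartite H \<longleftrightarrow> (\<exists>A \<subseteq> verts H. \<forall>e\<in>edges H. card (e \<inter> A) = 1)"

definition oct :: "'a graph \<Rightarrow> nat" where
  "oct H = (LEAST k. \<exists>S. S \<subseteq> verts H \<and> bipartite (del_verts H S) \<and> card S = k)"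

definition adj :: "'a graph \<Rightarrow> 'a \<Rightarrow> 'a \<Rightarrow> bool" where
  "adj H u v \<longleftrightarrow> {u, v} \<in> edges H"

definition reachable :: "'a graph \<Rightarrow> 'a \<Rightarrow> 'a \<Rightarrow> bool" where
  "reachable H u v \<longleftrightarrow> u \<in> verts H \<and> (adj H)\<^sup>*\<^sup>* u v"

definition components :: "'a graph \<Rightarrow> 'a set set" where
  "components H = {{v. reachable H u v} | u. u \<in> verts H}"

definition induced :: "'a graph \<Rightarrow> 'a set \<Rightarrow> 'a graph" where
  "induced H C = \<lparr> verts = C, edges = {e \<in> edges H. e \<subseteq> C} \<rparr>"

definition certificate :: "'a graph \<Rightarrow> 'a set \<Rightarrow> nat \<Rightarrow> 'a graph \<Rightarrow> bool" where
  "certificate G XC z H \<longleftrightarrow>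
     subgraph H G \<and> bipartite (del_verts H XC) \<and> oct H = card XC \<and>
     (\<forall>C\<in>components H. card (XC \<inter> C) \<le> z)"

end

theory Submission
  imports Defs
begin

lemma wf_del: "wf_graph H \<Longrightarrow> wf_graph (del_verts H S)"
  unfolding wf_graph_def del_verts_def by auto

lemma del_del: "del_verts (del_verts H A) B = del_verts H (A \<union> B)"
  unfolding del_verts_def by auto

lemma verts_del[simp]: "verts (del_verts H S) = verts H - S"
  unfolding del_verts_def by simp

lemma edges_del[simp]: "edges (del_verts H S) = {e \<in> edges H. e \<inter> S = {}}"
  unfolding del_verts_def by simp

lemma card_pair_int: "a \<noteq> b \<Longrightarrow> card ({a,b} \<inter> A) = 1 \<longleftrightarrow> ((a\<in>A) \<noteq> (b\<in>A))"
  by (cases "a \<in> A"; cases "b \<in> A") auto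

lemma wf_edge: "wf_graph H \<Longrightarrow> e \<in> edges H \<Longrightarrow> \<exists>a b. a \<noteq> b \<and> e = {a,b}"
  unfolding wf_graph_def by (metis card_2_iff)

lemma wf_edge_verts: "wf_graph H \<Longrightarrow> {a,b} \<in> edges H \<Longrightarrow> a \<in> verts H \<and> b \<in> verts H"
  unfolding wf_graph_def by blast

lemma wf_edge_neq: "wf_graph H \<Longrightarrow> {a,b} \<in> edges H \<Longrightarrow> a \<noteq> b"
  unfolding wf_graph_def by fastforce

lemma bip_coloring:
  assumes "wf_graph H" "bipartite H"
  shows "\<exists>A. \<forall>a b. {a,b} \<in> edges H \<longrightarrow> (a\<in>A) \<noteq> (b\<in>A)"
proof -
  obtain A where A: "\<forall>e\<in>edges H. card (e \<inter> A) = 1" using assms(2) unfolding bipartite_def by blast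
  have "(a\<in>A) \<noteq> (b\<in>A)" if "{a,b} \<in> edges H" for a b
  proof -
    have "a \<noteq> b" by (rule wf_edge_neq[OF assms(1) that])
    moreover have "card ({a,b} \<inter> A) = 1" using A that by blast
    ultimately show ?thesis using card_pair_int by metis
  qed
  then show ?thesis by blast
qed

lemma coloring_bip:
  assumes "wf_graph H" "\<forall>a b. {a,b} \<in> edges H \<longrightarrow> (a\<in>A) \<noteq> (b\<in>A)"
  shows "bipartite H"
  unfolding bipartite_def
proof (intro exI[of _ "A \<inter> verts H"] conjI ballI)
  fix e assume e: "e \<in> edges H"
  then obtain a b where ab: "a \<noteq> b" "e = {a,b}" using wf_edge[OF assms(1)] by blast
  have ev: "a \<in> verts H" "b \<in> verts H" using wf_edge_verts[OF assms(1)] e ab by auto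
  have 1: "e \<inter> (A \<inter> verts H) = {a,b} \<inter> A" using ab(2) ev by blast
  have 2: "(a\<in>A) \<noteq> (b\<in>A)" using spec[OF spec[OF assms(2), of a], of b] e ab(2) by simp
  show "card (e \<inter> (A \<inter> verts H)) = 1" unfolding 1 by (subst card_pair_int[OF ab(1)]) (rule 2)
qed blast

lemma oct_le:
  assumes "finite S" "S \<subseteq> verts H" "bipartite (del_verts H S)"
  shows "oct H \<le> card S"
  unfolding oct_def by (rule Least_le) (use assms in blast)

lemma oct_ex:
  assumes "wf_graph H"
  shows "\<exists>S. S \<subseteq> verts H \<and> bipartite (del_verts H S) \<and> card S = oct H"
proof -
  have "e \<inter> verts H \<noteq> {}" if "e \<in> edges H" for e
  proof -
    have "card e = 2" "e \<subseteq> verts H" using assms that unfolding wf_graph_def by auto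
    from \<open>e\<subseteq>verts H\<close> have "e \<inter> verts H = e" by blast
    moreover have "e \<noteq> {}" using \<open>card e = 2\<close> by auto
    ultimately show ?thesis by simp
  qed
  then have "edges (del_verts H (verts H)) = {}" by auto
  then have b: "bipartite (del_verts H (verts H))"
    unfolding bipartite_def by (intro exI[of _ "{}"]) simp
  show ?thesis unfolding oct_def
    by (rule LeastI_ex[where P="\<lambda>k. \<exists>S. S \<subseteq> verts H \<and> bipartite (del_verts H S) \<and> card S = k"])
      (use b in blast)
qed

lemma adj_sym: "adj H a b \<Longrightarrow> adj H b a"
  unfolding adj_def by (simp add: insert_commute)

lemma rt_sym: assumes "(adj H)\<^sup>*\<^sup>* a b" shows "(adj H)\<^sup>*\<^sup>* b a"
  using assms
proof (induction rule: rtranclp_induct)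
  case base then show ?case by (rule rtranclp.rtrancl_refl)
next
  case (step y z)
  have "adj H z y" using step.hyps(2) by (rule adj_sym)
  then show ?case using step.IH by (rule converse_rtranclp_into_rtranclp)
qed

lemma rt_verts: assumes "(adj H)\<^sup>*\<^sup>* a b" "wf_graph H" "a \<in> verts H" shows "b \<in> verts H"
  using assms(1)
proof (induction rule: rtranclp_induct)
  case base then show ?case by (rule assms(3))
next
  case (step y z)
  have "{y,z} \<in> edges H" using step.hyps(2) unfolding adj_def .
  then show ?case using wf_edge_verts[OF assms(2)] by blast
qed

lemma reach_verts: "wf_graph H \<Longrightarrow> reachable H a b \<Longrightarrow> b \<in> verts H"
  unfolding reachable_def using rt_verts[of H a b] by simp

lemma reach_sym: "wf_graph H \<Longrightarrow> reachable H a b \<Longrightarrow> reachable H b a"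
  unfolding reachable_def using rt_verts[of H a b] rt_sym[of H a b] by simp

lemma reach_trans: "reachable H a b \<Longrightarrow> reachable H b c \<Longrightarrow> reachable H a c"
  unfolding reachable_def using rtranclp_trans[of "adj H" a b c] by simp

lemma reach_refl: "a \<in> verts H \<Longrightarrow> reachable H a a"
  unfolding reachable_def by simp

lemma reach_edge: "wf_graph H \<Longrightarrow> {a,b} \<in> edges H \<Longrightarrow> reachable H a b"
proof -
  assume a: "wf_graph H" "{a,b} \<in> edges H"
  then have "adj H a b" unfolding adj_def by simp
  then have "(adj H)\<^sup>*\<^sup>* a b" by (rule r_into_rtranclp)
  then show ?thesis using wf_edge_verts[OF a] unfolding reachable_def by simp
qed

definition cp :: "'a graph \<Rightarrow> 'a \<Rightarrow> 'a set" where
  "cp H u = {v. reachable H u v}"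

lemma components_cp: "components H = cp H ` verts H"
  unfolding components_def cp_def by (simp add: setcompr_eq_image)

lemma cp_eq: assumes "wf_graph H" "reachable H a b" shows "cp H a = cp H b"
proof (rule set_eqI)
  fix v show "v \<in> cp H a \<longleftrightarrow> v \<in> cp H b"
    using reach_sym[OF assms] reach_trans[of H b a v] reach_trans[of H a b v] assms(2)
    by (auto simp: cp_def)
qed

lemma cp_self: "a \<in> verts H \<Longrightarrow> a \<in> cp H a"
  by (simp add: cp_def reach_refl)

lemma cp_sub: "wf_graph H \<Longrightarrow> cp H a \<subseteq> verts H"
  by (auto simp: cp_def dest: reach_verts)

lemma cp_mem_eq: assumes "wf_graph H" "b \<in> cp H a" shows "cp H b = cp H a"
proof -
  have "reachable H a b" using assms(2) unfolding cp_def by simp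
  from cp_eq[OF assms(1) this] show ?thesis by simp
qed

lemma comp_mem: assumes "wf_graph H" "C \<in> components H" "b \<in> C" shows "C = cp H b"
proof -
  obtain u where "C = cp H u" using assms(2) unfolding components_cp by blast
  then show ?thesis using cp_mem_eq[OF assms(1), of b u] assms(3) by simp
qed

lemma comp_disj: "wf_graph H \<Longrightarrow> C \<in> components H \<Longrightarrow> C' \<in> components H \<Longrightarrow> b \<in> C \<Longrightarrow> b \<in> C' \<Longrightarrow> C = C'"
  using comp_mem[of H C b] comp_mem[of H C' b] by simp

lemma rt_mono: assumes "(adj H)\<^sup>*\<^sup>* a b" "edges H \<subseteq> edges H'" shows "(adj H')\<^sup>*\<^sup>* a b"
  using assms(1)
proof (induction rule: rtranclp_induct)
  case base then show ?case by simp
next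
  case (step y z)
  have "adj H' y z" using step.hyps(2) assms(2) unfolding adj_def by blast
  then show ?case using step.IH by simp
qed

lemma reach_mono: "reachable H a b \<Longrightarrow> verts H \<subseteq> verts H' \<Longrightarrow> edges H \<subseteq> edges H' \<Longrightarrow> reachable H' a b"
  unfolding reachable_def using rt_mono[of H a b H'] by auto

lemma color_const:
  assumes "(adj Y)\<^sup>*\<^sup>* u w"
    "\<forall>p q. (adj Y)\<^sup>*\<^sup>* u p \<longrightarrow> adj Y p q \<longrightarrow> ((p\<in>A)\<noteq>(q\<in>A)) \<and> ((p\<in>B)\<noteq>(q\<in>B))"
  shows "((w\<in>A)\<noteq>(w\<in>B)) = ((u\<in>A)\<noteq>(u\<in>B))"
  using assms(1)
proof (induction rule: rtranclp_induct)
  case base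
  then show ?case by simp
next
  case (step b c)
  have "((b\<in>A)\<noteq>(c\<in>A)) \<and> ((b\<in>B)\<noteq>(c\<in>B))"
    using spec[OF spec[OF assms(2), of b], of c] step.hyps by simp
  then show ?case using step.IH by auto
qed


lemma oct_part:
  fixes H :: "'a graph"
  assumes wf: "wf_graph H" and XCs: "XC \<subseteq> verts H" and octH: "oct H = card XC"
    and compz: "\<forall>C\<in>components H. card (XC \<inter> C) \<le> z"
    and Bp: "\<forall>a b. {a,b} \<in> edges H \<longrightarrow> a \<notin> XC \<longrightarrow> b \<notin> XC \<longrightarrow> (a\<in>B) \<noteq> (b\<in>B)"
    and Rsub: "R \<subseteq> components (del_verts H XC)"
    and cover: "\<forall>D \<in> components (del_verts H XC) - R. \<forall>x\<in>XC. \<forall>x'\<in>XC. \<forall>v\<in>D. \<forall>v'\<in>D.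
       {x,v} \<in> edges H \<longrightarrow> {x',v'} \<in> edges H \<longrightarrow> (x \<noteq> x' \<or> (v\<in>B) \<noteq> (v'\<in>B)) \<longrightarrow>
       (\<exists>T\<subseteq>R. card T = z \<and> (\<forall>D'\<in>T. \<exists>w\<in>D'. \<exists>w'\<in>D'. {x,w}\<in>edges H \<and> {x',w'}\<in>edges H \<and>
            ((w\<in>B)\<noteq>(w'\<in>B)) = ((v\<in>B)\<noteq>(v'\<in>B))))"
  shows "card XC \<le> oct (del_verts H (\<Union>(components (del_verts H XC) - R)))"
proof (rule ccontr)
  define HX where "HX = del_verts H XC"
  define Dr where "Dr = \<Union>(components HX - R)"
  define HR where "HR = del_verts H Dr"
  assume "\<not> card XC \<le> oct (del_verts H (\<Union>(components (del_verts H XC) - R)))"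
  then have lt: "oct HR < card XC" unfolding HR_def Dr_def HX_def by simp
  have wfX: "wf_graph HX" unfolding HX_def by (rule wf_del[OF wf])
  have wfR: "wf_graph HR" unfolding HR_def by (rule wf_del[OF wf])
  have finH: "finite (verts H)" using wf unfolding wf_graph_def by simp
  have compX_sub: "C \<subseteq> verts H - XC" if "C \<in> components HX" for C
    using that cp_sub[OF wfX] unfolding components_cp HX_def by auto
  have DrX: "Dr \<inter> XC = {}" unfolding Dr_def using compX_sub by blast
  obtain S where S: "S \<subseteq> verts HR" "bipartite (del_verts HR S)" "card S = oct HR"
    using oct_ex[OF wfR] by blast
  have SH: "S \<subseteq> verts H" using S(1) unfolding HR_def by auto
  have finS: "finite S" using SH finH finite_subset by blast
  have cardS: "card S < card XC" using S(3) lt by simp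
  obtain A where A0: "\<forall>a b. {a,b} \<in> edges (del_verts HR S) \<longrightarrow> (a\<in>A) \<noteq> (b\<in>A)"
    using bip_coloring[OF wf_del[OF wfR] S(2)] by blast
  have Ap: "(a\<in>A) \<noteq> (b\<in>A)" if "{a,b} \<in> edges H" "a \<notin> Dr" "b \<notin> Dr" "a \<notin> S" "b \<notin> S" for a b
    using spec[OF spec[OF A0, of a], of b] that unfolding HR_def by auto
  define Kc where "Kc = cp H"
  define good where "good v \<longleftrightarrow> card (S \<inter> Kc v) < card (XC \<inter> Kc v)" for v
  define Ug where "Ug = {v \<in> verts H. good v}"
  define Ub where "Ub = {v \<in> verts H. \<not> good v}"
  define S' where "S' = (S \<inter> Ug) \<union> (XC \<inter> Ub)"
  define f where "f D = (SOME t. \<forall>x v. x\<in>XC \<longrightarrow> x\<notin>S \<longrightarrow> v\<in>D \<longrightarrow> {x,v}\<in>edges H \<longrightarrow> t = ((x\<in>A) = (v\<in>B)))" for D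
  define A' where "A' = {v. (\<not> good v \<and> v\<in>B) \<or> (good v \<and> v\<notin>Dr \<and> v\<in>A) \<or> (good v \<and> v\<in>Dr \<and> ((v\<in>B) \<noteq> f (cp HX v)))}"
  have A'_bad: "v\<in>A' \<longleftrightarrow> v\<in>B" if "\<not> good v" for v using that unfolding A'_def by blast
  have A'_good: "v\<in>A' \<longleftrightarrow> v\<in>A" if "good v" "v \<notin> Dr" for v using that unfolding A'_def by blast
  have A'_dr: "v\<in>A' \<longleftrightarrow> ((v\<in>B) \<noteq> f (cp HX v))" if "good v" "v \<in> Dr" for v
    using that unfolding A'_def by simp
  have reach_good: "good a = good b" "Kc a = Kc b" if "reachable H a b" for a b
    using cp_eq[OF wf that] unfolding good_def Kc_def by auto
  have edge_good: "good a = good b" "Kc a = Kc b" if "{a,b} \<in> edges H" for a b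
    using reach_good reach_edge[OF wf that] by auto
  have K3: "cp HX a \<in> components HX - R" "a \<in> cp HX a" "cp HX a \<subseteq> Dr" if aD: "a \<in> Dr" for a
  proof -
    obtain D where D: "D \<in> components HX - R" "a \<in> D" using aD unfolding Dr_def by blast
    have "D = cp HX a" using comp_mem[OF wfX _ D(2)] D(1) by blast
    then show "cp HX a \<in> components HX - R" "a \<in> cp HX a" "cp HX a \<subseteq> Dr"
      using D unfolding Dr_def by auto
  qed
  have K2: "f (cp HX a) = ((x\<in>A) = (v\<in>B))" if aD: "a \<in> Dr" and ga: "good a" and xX: "x\<in>XC"
     and xS: "x\<notin>S" and vD: "v \<in> cp HX a" and xv: "{x,v}\<in>edges H" for a x v
  proof -
    define D where "D = cp HX a"
    define P where "P t \<longleftrightarrow> (\<forall>x v. x\<in>XC \<longrightarrow> x\<notin>S \<longrightarrow> v\<in>D \<longrightarrow> {x,v}\<in>edges H \<longrightarrow> t = ((x\<in>A) = (v\<in>B)))" for t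
    have Dcomp: "D \<in> components HX - R" unfolding D_def by (rule K3(1)[OF aD])
    have aH: "a \<in> verts H" using aD compX_sub unfolding Dr_def by blast
    have "\<exists>t. P t"
    proof (rule ccontr)
      assume nex: "\<not> (\<exists>t. P t)"
      then have "\<not> P True" "\<not> P False" by blast+
      then obtain x1 v1 x2 v2 where 1: "x1\<in>XC" "x1\<notin>S" "v1\<in>D" "{x1,v1}\<in>edges H" "(x1\<in>A) \<noteq> (v1\<in>B)"
        and 2: "x2\<in>XC" "x2\<notin>S" "v2\<in>D" "{x2,v2}\<in>edges H" "(x2\<in>A) = (v2\<in>B)"
        unfolding P_def by auto
      have nt: "x1 \<noteq> x2 \<or> (v1\<in>B) \<noteq> (v2\<in>B)" using 1(5) 2(5) by auto
      define Q where "Q D' \<longleftrightarrow> (\<exists>w\<in>D'. \<exists>w'\<in>D'. {x1,w}\<in>edges H \<and> {x2,w'}\<in>edges H \<and>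
            ((w\<in>B)\<noteq>(w'\<in>B)) = ((v1\<in>B)\<noteq>(v2\<in>B)))" for D'
      have "\<exists>T\<subseteq>R. card T = z \<and> (\<forall>D'\<in>T. Q D')"
        unfolding Q_def by (rule cover[folded HX_def, rule_format, OF Dcomp 1(1) 2(1) 1(3) 2(3) 1(4) 2(4) nt])
      then obtain T where T: "T \<subseteq> R" "card T = z" "\<forall>D'\<in>T. Q D'" by blast
      have TX: "T \<subseteq> components HX" using T(1) Rsub HX_def by simp
      have verts_sub: "verts HX \<subseteq> verts H" "edges HX \<subseteq> edges H" unfolding HX_def by auto
      have ra1: "reachable H a x1"
      proof -
        have "v1 \<in> cp HX a" using 1(3) unfolding D_def .
        then have "reachable HX a v1" unfolding cp_def by simp
        then have "reachable H a v1" by (rule reach_mono[OF _ verts_sub])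
        moreover have "reachable H v1 x1" using reach_sym[OF wf reach_edge[OF wf 1(4)]] .
        ultimately show ?thesis by (rule reach_trans)
      qed
      have inK: "D' \<inter> S \<subseteq> S \<inter> Kc a" if "D' \<in> T" for D'
      proof
        fix s assume s: "s \<in> D' \<inter> S"
        have "Q D'" using T(3) that by blast
        then obtain w where w: "w \<in> D'" "{x1,w}\<in>edges H" unfolding Q_def by auto
        have "D' = cp HX w" using comp_mem[OF wfX _ w(1)] TX that by blast
        then have "reachable HX w s" using s unfolding cp_def by simp
        then have "reachable H w s" by (rule reach_mono[OF _ verts_sub])
        then have "reachable H a s" using reach_trans[OF reach_trans[OF ra1 reach_edge[OF wf w(2)]]] by simp
        then show "s \<in> S \<inter> Kc a" using s unfolding Kc_def cp_def by simp
      qed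
      have "\<exists>D'\<in>T. D' \<inter> S = {}"
      proof (rule ccontr)
        assume "\<not> (\<exists>D'\<in>T. D' \<inter> S = {})"
        then have ne: "\<exists>s. s \<in> D' \<inter> S" if "D' \<in> T" for D' using that by blast
        define \<phi> where "\<phi> D' = (SOME s. s \<in> D' \<inter> S)" for D'
        have phi: "\<phi> D' \<in> D' \<inter> S" if "D' \<in> T" for D'
          unfolding \<phi>_def using someI_ex[OF ne[OF that]] .
        have "inj_on \<phi> T"
        proof (rule inj_onI)
          fix D1 D2 assume d: "D1 \<in> T" "D2 \<in> T" "\<phi> D1 = \<phi> D2"
          have "\<phi> D1 \<in> D1" using phi[OF d(1)] by blast
          moreover have "\<phi> D2 \<in> D2" using phi[OF d(2)] by blast
          ultimately have "\<phi> D1 \<in> D1" "\<phi> D1 \<in> D2" using d(3) by auto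
          then show "D1 = D2" using comp_disj[OF wfX] TX d(1,2) by blast
        qed
        moreover have "\<phi> ` T \<subseteq> S \<inter> Kc a" using phi inK by blast
        moreover have "finite (S \<inter> Kc a)" using finS by simp
        ultimately have c1: "card T \<le> card (S \<inter> Kc a)" by (rule card_inj_on_le)
        have c2: "card (S \<inter> Kc a) < card (XC \<inter> Kc a)" using ga unfolding good_def .
        have kc: "Kc a \<in> components H" unfolding Kc_def components_cp using aH by (rule imageI)
        have c3: "card (XC \<inter> Kc a) \<le> z" using bspec[OF compz kc] .
        show False using c1 c2 c3 T(2) by linarith
      qed
      then obtain D' where D': "D' \<in> T" "D' \<inter> S = {}" by blast
      have QD: "Q D'" using T(3) D'(1) by blast
      then obtain w where ww1: "w\<in>D'" and ex: "\<exists>w'\<in>D'. {x1,w}\<in>edges H \<and> {x2,w'}\<in>edges H \<and>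
            ((w\<in>B)\<noteq>(w'\<in>B)) = ((v1\<in>B)\<noteq>(v2\<in>B))" unfolding Q_def by (rule bexE)
      from ex obtain w' where ww2: "w'\<in>D'" and ww3: "{x1,w}\<in>edges H \<and> {x2,w'}\<in>edges H \<and>
            ((w\<in>B)\<noteq>(w'\<in>B)) = ((v1\<in>B)\<noteq>(v2\<in>B))" by (rule bexE)
      have ww: "w\<in>D'" "w'\<in>D'" "{x1,w}\<in>edges H" "{x2,w'}\<in>edges H"
          "((w\<in>B)\<noteq>(w'\<in>B)) = ((v1\<in>B)\<noteq>(v2\<in>B))"
        using ww1 ww2 conjunct1[OF ww3] conjunct1[OF conjunct2[OF ww3]] conjunct2[OF conjunct2[OF ww3]]
        by - assumption+
      have D'X: "D' \<in> components HX" using TX D'(1) by blast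
      have D'R: "D' \<in> R" using T(1) D'(1) by blast
      have D'Dr: "D' \<inter> Dr = {}"
      proof -
        have "p \<notin> Dr" if "p \<in> D'" for p
        proof
          assume "p \<in> Dr"
          then obtain D'' where "D'' \<in> components HX - R" "p \<in> D''" unfolding Dr_def by blast
          then show False using comp_disj[OF wfX D'X, of D'' p] that D'R by blast
        qed
        then show ?thesis by blast
      qed
      have D'sub: "D' \<subseteq> verts H - XC" using compX_sub[OF D'X] .
      have D'eq: "D' = cp HX w" using comp_mem[OF wfX D'X ww(1)] .
      have rww: "(adj HX)\<^sup>*\<^sup>* w w'" using ww(2) unfolding D'eq cp_def reachable_def by simp
      have wHX: "w \<in> verts HX" using ww(1) D'sub unfolding HX_def by auto
      have cc: "((w'\<in>A)\<noteq>(w'\<in>B)) = ((w\<in>A)\<noteq>(w\<in>B))"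
      proof (rule color_const[OF rww], intro allI impI)
        fix p q assume pq: "(adj HX)\<^sup>*\<^sup>* w p" "adj HX p q"
        have "(adj HX)\<^sup>*\<^sup>* w q" using pq by (rule rtranclp.rtrancl_into_rtrancl)
        then have "p \<in> D'" "q \<in> D'" using pq(1) wHX unfolding D'eq cp_def reachable_def by auto
        then have nn: "p \<notin> Dr" "q \<notin> Dr" "p \<notin> S" "q \<notin> S" "p \<notin> XC" "q \<notin> XC"
          using D'Dr D'(2) D'sub by auto
        have e: "{p,q} \<in> edges H" using pq(2) unfolding adj_def HX_def by simp
        show "((p\<in>A)\<noteq>(q\<in>A)) \<and> ((p\<in>B)\<noteq>(q\<in>B))"
          using Ap[OF e nn(1-4)] spec[OF spec[OF Bp, of p], of q] e nn(5,6) by simp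
      qed
      have wn: "w \<notin> Dr" "w' \<notin> Dr" "w \<notin> S" "w' \<notin> S" using D'Dr D'(2) ww(1,2) by auto
      have xn: "x1 \<notin> Dr" "x2 \<notin> Dr" using DrX 1(1) 2(1) by auto
      have h5: "(x1\<in>A)\<noteq>(w\<in>A)" using Ap[OF ww(3) xn(1) wn(1) 1(2) wn(3)] .
      have h6: "(x2\<in>A)\<noteq>(w'\<in>A)" using Ap[OF ww(4) xn(2) wn(2) 2(2) wn(4)] .
      show False using 1(5) 2(5) ww(5) cc h5 h6 by argo
    qed
    then have "P (f D)" unfolding f_def P_def by (rule someI_ex)
    then show ?thesis using xX xS vD xv unfolding P_def D_def by simp
  qed
  have edgeDr: "(a\<in>A') \<noteq> (b\<in>A')" if ab: "{a,b}\<in>edges H" "a\<notin>S'" "b\<notin>S'" "a\<in>Dr" for a b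
  proof -
    have aX: "a \<notin> XC" using DrX ab(4) by blast
    have v: "a \<in> verts H" "b \<in> verts H" using wf_edge_verts[OF wf ab(1)] by auto
    have g: "good a = good b" using edge_good(1)[OF ab(1)] .
    show ?thesis
    proof (cases "good a")
      case False
      then have "b \<notin> XC" using ab(3) v g unfolding S'_def Ub_def by auto
      then have "(a\<in>B) \<noteq> (b\<in>B)" using spec[OF spec[OF Bp, of a], of b] ab(1) aX by simp
      then show ?thesis using A'_bad[OF False] A'_bad[OF False[unfolded g]] by simp
    next
      case True
      then have nS: "a \<notin> S" "b \<notin> S" using ab(2,3) v g unfolding S'_def Ug_def by auto
      show ?thesis
      proof (cases "b \<in> XC")
        case False
        then have "{a,b} \<in> edges HX" using ab(1) aX unfolding HX_def by auto
        then have r: "reachable HX a b" by (rule reach_edge[OF wfX])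
        then have e: "cp HX b = cp HX a" using cp_eq[OF wfX r] by simp
        have "b \<in> cp HX a" using r unfolding cp_def by simp
        then have bD: "b \<in> Dr" using K3(3)[OF ab(4)] by blast
        have "(a\<in>B) \<noteq> (b\<in>B)" using spec[OF spec[OF Bp, of a], of b] ab(1) aX False by simp
        then show ?thesis using A'_dr[OF True ab(4)] A'_dr[OF True[unfolded g] bD] e by simp
      next
        case bX: True
        then have bD: "b \<notin> Dr" using DrX by blast
        have "{b,a}\<in>edges H" using ab(1) by (simp add: insert_commute)
        then have "f (cp HX a) = ((b\<in>A) = (a\<in>B))"
          using K2[OF ab(4) True bX nS(2) K3(2)[OF ab(4)]] by blast
        then show ?thesis using A'_dr[OF True ab(4)] A'_good[OF True[unfolded g] bD]
          by (cases "a \<in> B"; cases "b \<in> A") auto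
      qed
    qed
  qed
  have edgeA': "(a\<in>A') \<noteq> (b\<in>A')" if ab: "{a,b}\<in>edges H" "a\<notin>S'" "b\<notin>S'" for a b
  proof (cases "a \<in> Dr")
    case True
    show ?thesis by (rule edgeDr[OF ab True])
  next
    case aD: False
    show ?thesis
    proof (cases "b \<in> Dr")
      case True
      have "{b,a}\<in>edges H" using ab(1) by (simp add: insert_commute)
      then have "(b\<in>A') \<noteq> (a\<in>A')" by (rule edgeDr[OF _ ab(3) ab(2) True])
      then show ?thesis by (cases "a\<in>A'") auto
    next
      case bD: False
      have v: "a \<in> verts H" "b \<in> verts H" using wf_edge_verts[OF wf ab(1)] by auto
      have g: "good a = good b" using edge_good(1)[OF ab(1)] .
      show ?thesis
      proof (cases "good a")
        case True
        then have "a \<notin> S" "b \<notin> S" using ab(2,3) v g unfolding S'_def Ug_def by auto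
        then have "(a\<in>A) \<noteq> (b\<in>A)" using Ap[OF ab(1) aD bD] by simp
        then show ?thesis using A'_good[OF True aD] A'_good[OF True[unfolded g] bD] by simp
      next
        case False
        then have "a \<notin> XC" "b \<notin> XC" using ab(2,3) v g unfolding S'_def Ub_def by auto
        then have "(a\<in>B) \<noteq> (b\<in>B)" using spec[OF spec[OF Bp, of a], of b] ab(1) by simp
        then show ?thesis using A'_bad[OF False] A'_bad[OF False[unfolded g]] by simp
      qed
    qed
  qed
  have bipS': "bipartite (del_verts H S')"
  proof (rule coloring_bip[OF wf_del[OF wf], of _ A'], intro allI impI)
    fix a b assume "{a, b} \<in> edges (del_verts H S')"
    then have "{a,b}\<in>edges H" "a\<notin>S'" "b\<notin>S'" by auto
    then show "(a\<in>A') \<noteq> (b\<in>A')" by (rule edgeA')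
  qed
  have S'H: "S' \<subseteq> verts H" unfolding S'_def Ug_def Ub_def by auto
  have cardS': "card S' \<le> card S"
  proof -
    have finU: "finite (S \<inter> Ug)" "finite (XC \<inter> Ub)" "finite (S \<inter> Ub)"
      using finS finite_subset[OF XCs finH] by auto
    have c1: "card S' \<le> card (S \<inter> Ug) + card (XC \<inter> Ub)" unfolding S'_def by (rule card_Un_le)
    have "S = (S \<inter> Ug) \<union> (S \<inter> Ub)" using SH unfolding Ug_def Ub_def by auto
    moreover have "(S \<inter> Ug) \<inter> (S \<inter> Ub) = {}" unfolding Ug_def Ub_def by auto
    ultimately have c2: "card S = card (S \<inter> Ug) + card (S \<inter> Ub)"
      using card_Un_disjoint[OF finU(1) finU(3)] by metis
    define BadC where "BadC = Kc ` Ub"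
    have KcUb: "Kc v \<subseteq> Ub" if "v \<in> Ub" for v
    proof
      fix w assume w: "w \<in> Kc v"
      then have "Kc w = Kc v" unfolding Kc_def using cp_mem_eq[OF wf] by blast
      moreover have "w \<in> verts H" using w cp_sub[OF wf] unfolding Kc_def by blast
      ultimately show "w \<in> Ub" using that unfolding Ub_def good_def by auto
    qed
    have UN: "(\<Union>C\<in>BadC. Y \<inter> C) = Y \<inter> Ub" for Y
    proof
      show "(\<Union>C\<in>BadC. Y \<inter> C) \<subseteq> Y \<inter> Ub" using KcUb unfolding BadC_def by blast
      show "Y \<inter> Ub \<subseteq> (\<Union>C\<in>BadC. Y \<inter> C)"
      proof
        fix v assume "v \<in> Y \<inter> Ub"
        then have "v \<in> Y \<inter> Kc v" "Kc v \<in> BadC"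
          using cp_self[of v H] unfolding BadC_def Kc_def Ub_def by auto
        then show "v \<in> (\<Union>C\<in>BadC. Y \<inter> C)" by blast
      qed
    qed
    have finB: "finite BadC" unfolding BadC_def Ub_def using finH by simp
    have disj: "\<forall>C\<in>BadC. \<forall>C'\<in>BadC. C \<noteq> C' \<longrightarrow> (Y \<inter> C) \<inter> (Y \<inter> C') = {}" for Y
    proof (intro ballI impI)
      fix C C' assume "C \<in> BadC" "C' \<in> BadC" "C \<noteq> C'"
      then obtain v v' where "C = Kc v" "C' = Kc v'" unfolding BadC_def by blast
      then show "(Y \<inter> C) \<inter> (Y \<inter> C') = {}" using \<open>C \<noteq> C'\<close> cp_mem_eq[OF wf] unfolding Kc_def by blast
    qed
    have finC: "\<forall>C\<in>BadC. finite (Y \<inter> C)" for Y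
      using cp_sub[OF wf] finH finite_subset unfolding BadC_def Kc_def by blast
    have "card (XC \<inter> Ub) = (\<Sum>C\<in>BadC. card (XC \<inter> C))"
      using card_UN_disjoint[OF finB finC disj] UN by metis
    also have "\<dots> \<le> (\<Sum>C\<in>BadC. card (S \<inter> C))"
    proof (rule sum_mono)
      fix C assume "C \<in> BadC"
      then obtain v where "v \<in> Ub" "C = Kc v" unfolding BadC_def by blast
      then show "card (XC \<inter> C) \<le> card (S \<inter> C)" unfolding Ub_def good_def by auto
    qed
    also have "\<dots> = card (S \<inter> Ub)"
      using card_UN_disjoint[OF finB finC disj] UN by metis
    finally show ?thesis using c1 c2 by simp
  qed
  have "oct H \<le> card S'" using oct_le[OF finite_subset[OF S'H finH] S'H bipS'] .
  then show False using octH cardS' cardS by simp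
qed


lemma bip_mono:
  assumes "wf_graph X" "wf_graph Y" "edges Y \<subseteq> edges X" "bipartite X"
  shows "bipartite Y"
proof -
  obtain A where A: "\<forall>a b. {a,b} \<in> edges X \<longrightarrow> (a\<in>A) \<noteq> (b\<in>A)" using bip_coloring[OF assms(1,4)] by blast
  have "\<forall>a b. {a,b} \<in> edges Y \<longrightarrow> (a\<in>A) \<noteq> (b\<in>A)"
  proof (intro allI impI)
    fix a b assume "{a,b} \<in> edges Y"
    then have "{a,b} \<in> edges X" using assms(3) by blast
    then show "(a\<in>A) \<noteq> (b\<in>A)" using spec[OF spec[OF A, of a], of b] by simp
  qed
  then show ?thesis by (rule coloring_bip[OF assms(2)])
qed

definition realized :: "'a graph \<Rightarrow> 'a set \<Rightarrow> 'a set \<Rightarrow> 'a \<Rightarrow> 'a \<Rightarrow> bool \<Rightarrow> bool" where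
  "realized H B D y y' r \<longleftrightarrow> (\<exists>v\<in>D. \<exists>v'\<in>D. {y,v}\<in>edges H \<and> {y',v'}\<in>edges H \<and> ((v\<in>B)\<noteq>(v'\<in>B)) = r)"

lemma realized_sym1: assumes "realized H B D y y' r" shows "realized H B D y' y r"
proof -
  obtain v where v: "v \<in> D" and ex: "\<exists>v'\<in>D. {y,v}\<in>edges H \<and> {y',v'}\<in>edges H \<and> ((v\<in>B)\<noteq>(v'\<in>B)) = r"
    using assms unfolding realized_def by (rule bexE)
  from ex obtain v' where v': "v' \<in> D" and c: "{y,v}\<in>edges H \<and> {y',v'}\<in>edges H \<and> ((v\<in>B)\<noteq>(v'\<in>B)) = r"
    by (rule bexE)
  have "((v'\<in>B)\<noteq>(v\<in>B)) = r" using conjunct2[OF conjunct2[OF c]] by auto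
  then have "{y',v'}\<in>edges H \<and> {y,v}\<in>edges H \<and> ((v'\<in>B)\<noteq>(v\<in>B)) = r" using c by simp
  then show ?thesis unfolding realized_def using v v' by blast
qed

lemma realized_sym: "realized H B D y y' r = realized H B D y' y r"
  using realized_sym1 by metis

theorem mainTheorem6:
  fixes G H :: "'a graph" and XC :: "'a set" and z :: nat
  assumes "wf_graph G"
    and "XC \<subseteq> verts G"
    and "certificate G XC z H"
  shows "\<exists>H'. subgraph H' H \<and> certificate G XC z H' \<and>
           card (components (del_verts H' XC)) \<le> z^2 * card XC"
proof -
  have subHG: "subgraph H G" and bipH: "bipartite (del_verts H XC)" and octH: "oct H = card XC"
    and compz: "\<forall>C\<in>components H. card (XC \<inter> C) \<le> z"
    using assms(3) unfolding certificate_def by auto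
  have wf: "wf_graph H" using subHG unfolding subgraph_def by simp
  have finH: "finite (verts H)" using wf unfolding wf_graph_def by simp
  have finXC: "finite XC" using assms(1,2) finite_subset unfolding wf_graph_def by blast
  define HX where "HX = del_verts H XC"
  have wfX: "wf_graph HX" unfolding HX_def by (rule wf_del[OF wf])
  have XCs: "XC \<subseteq> verts H"
  proof -
    define X0 where "X0 = XC \<inter> verts H"
    have "edges (del_verts H X0) \<subseteq> edges HX"
    proof
      fix e assume e: "e \<in> edges (del_verts H X0)"
      then have "e \<subseteq> verts H" using wf unfolding wf_graph_def by auto
      then show "e \<in> edges HX" using e unfolding HX_def X0_def by auto
    qed
    then have "bipartite (del_verts H X0)" using bip_mono[OF wfX wf_del[OF wf]] bipH HX_def by blast
    then have "oct H \<le> card X0" using oct_le[of X0 H] finXC unfolding X0_def by auto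
    then have "card XC \<le> card X0" using octH by simp
    moreover have "card X0 \<le> card XC" using finXC unfolding X0_def by (simp add: card_mono)
    ultimately have "X0 = XC" using card_subset_eq[OF finXC] unfolding X0_def by auto
    then show ?thesis unfolding X0_def by blast
  qed
  obtain B where B0: "\<forall>a b. {a,b} \<in> edges HX \<longrightarrow> (a\<in>B) \<noteq> (b\<in>B)"
    using bip_coloring[OF wfX bipH[folded HX_def]] by blast
  have Bp: "\<forall>a b. {a,b} \<in> edges H \<longrightarrow> a \<notin> XC \<longrightarrow> b \<notin> XC \<longrightarrow> (a\<in>B) \<noteq> (b\<in>B)"
  proof (intro allI impI)
    fix a b assume "{a,b} \<in> edges H" "a \<notin> XC" "b \<notin> XC"
    then have "{a,b} \<in> edges HX" unfolding HX_def by auto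
    then show "(a\<in>B) \<noteq> (b\<in>B)" using spec[OF spec[OF B0, of a], of b] by simp
  qed
  obtain idx :: "'a \<Rightarrow> nat" where idx: "inj_on idx XC" using finite_imp_inj_to_nat_seg[OF finXC] by blast
  define rk where "rk y y' = (if y = y' then True else idx y < idx y')" for y y'
  define Keys where "Keys = {(y,y'). y\<in>XC \<and> y'\<in>XC \<and> reachable H y y'}"
  define Real where "Real k = {D \<in> components HX. realized H B D (fst k) (snd k) (rk (fst k) (snd k))}" for k
  define Ksel where "Ksel k = (SOME T. T \<subseteq> Real k \<and> card T \<le> z \<and> (T = Real k \<or> card T = z))" for k
  define R where "R = (\<Union>k\<in>Keys. Ksel k)"
  define Dr where "Dr = \<Union>(components HX - R)"
  define H' where "H' = del_verts H Dr"
  have finCX: "finite (components HX)" unfolding components_cp using finH unfolding HX_def by simp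
  have Ksel: "Ksel k \<subseteq> Real k" "card (Ksel k) \<le> z" "Ksel k = Real k \<or> card (Ksel k) = z" for k
  proof -
    have finR: "finite (Real k)" using finCX unfolding Real_def by simp
    have "\<exists>T. T \<subseteq> Real k \<and> card T \<le> z \<and> (T = Real k \<or> card T = z)"
    proof (cases "card (Real k) \<le> z")
      case True then show ?thesis by (intro exI[of _ "Real k"]) simp
    next
      case False
      then have "z \<le> card (Real k)" by simp
      then obtain T where "T \<subseteq> Real k" "card T = z" by (rule obtain_subset_with_card_n)
      then show ?thesis by (intro exI[of _ T]) simp
    qed
    then have "Ksel k \<subseteq> Real k \<and> card (Ksel k) \<le> z \<and> (Ksel k = Real k \<or> card (Ksel k) = z)"
      unfolding Ksel_def by (rule someI_ex)
    then show "Ksel k \<subseteq> Real k" "card (Ksel k) \<le> z" "Ksel k = Real k \<or> card (Ksel k) = z" by auto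
  qed
  have Rsub: "R \<subseteq> components HX" using Ksel(1) unfolding R_def Real_def by blast
  have compX_sub: "C \<subseteq> verts H - XC" if "C \<in> components HX" for C
    using that cp_sub[OF wfX] unfolding components_cp HX_def by auto
  have DrX: "Dr \<inter> XC = {}" unfolding Dr_def using compX_sub by blast
  have cover: "\<forall>D \<in> components (del_verts H XC) - R. \<forall>x\<in>XC. \<forall>x'\<in>XC. \<forall>v\<in>D. \<forall>v'\<in>D.
       {x,v} \<in> edges H \<longrightarrow> {x',v'} \<in> edges H \<longrightarrow> (x \<noteq> x' \<or> (v\<in>B) \<noteq> (v'\<in>B)) \<longrightarrow>
       (\<exists>T\<subseteq>R. card T = z \<and> (\<forall>D'\<in>T. \<exists>w\<in>D'. \<exists>w'\<in>D'. {x,w}\<in>edges H \<and> {x',w'}\<in>edges H \<and>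
            ((w\<in>B)\<noteq>(w'\<in>B)) = ((v\<in>B)\<noteq>(v'\<in>B))))"
  proof (intro ballI impI)
    fix D x x' v v'
    assume D: "D \<in> components (del_verts H XC) - R" and x: "x\<in>XC" "x'\<in>XC" and v: "v\<in>D" "v'\<in>D"
      and e: "{x,v}\<in>edges H" "{x',v'}\<in>edges H" and nt: "x \<noteq> x' \<or> (v\<in>B) \<noteq> (v'\<in>B)"
    define p where "p = ((v\<in>B)\<noteq>(v'\<in>B))"
    have DX: "D \<in> components HX" "D \<notin> R" using D unfolding HX_def by auto
    have rD: "realized H B D x x' p"
    proof -
      have "{x,v}\<in>edges H \<and> {x',v'}\<in>edges H \<and> ((v\<in>B)\<noteq>(v'\<in>B)) = p" using e p_def by simp
      then show ?thesis unfolding realized_def by (rule bexI[OF bexI[OF _ v(2)] v(1)])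
    qed
    have verts_sub: "verts HX \<subseteq> verts H" "edges HX \<subseteq> edges H" unfolding HX_def by auto
    have rxx: "reachable H x x'"
    proof -
      have "D = cp HX v" by (rule comp_mem[OF wfX DX(1) v(1)])
      then have "reachable HX v v'" using v(2) unfolding cp_def by simp
      then have "reachable H v v'" by (rule reach_mono[OF _ verts_sub])
      then show ?thesis
        using reach_trans[OF reach_trans[OF reach_edge[OF wf e(1)]] reach_sym[OF wf reach_edge[OF wf e(2)]]]
        by simp
    qed
    have main: "\<exists>y y'. (y,y')\<in>Keys \<and> realized H B D y y' (rk y y') \<and>
        (\<forall>D'. realized H B D' y y' (rk y y') \<longrightarrow> realized H B D' x x' p)"
    proof (cases "rk x x' = p")
      case True
      have "(x,x')\<in>Keys" unfolding Keys_def using x rxx by simp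
      then show ?thesis using rD True by auto
    next
      case False
      have neq: "x \<noteq> x'"
      proof
        assume "x = x'"
        then have "p" using nt p_def by simp
        then show False using False \<open>x = x'\<close> unfolding rk_def by simp
      qed
      then have "idx x \<noteq> idx x'" using idx x inj_on_def by metis
      then have rk': "rk x' x = p" using False neq unfolding rk_def by auto
      have "(x',x)\<in>Keys" unfolding Keys_def using x reach_sym[OF wf rxx] by simp
      moreover have "realized H B D x' x (rk x' x)" unfolding rk' by (rule realized_sym1[OF rD])
      moreover have "\<forall>D'. realized H B D' x' x (rk x' x) \<longrightarrow> realized H B D' x x' p"
        unfolding rk' by (intro allI impI) (erule realized_sym1)
      ultimately show ?thesis by blast
    qed
    then obtain y y' where k: "(y,y')\<in>Keys" "realized H B D y y' (rk y y')"
      "\<forall>D'. realized H B D' y y' (rk y y') \<longrightarrow> realized H B D' x x' p" by blast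
    define T where "T = Ksel (y,y')"
    have TR: "T \<subseteq> R" unfolding T_def R_def using k(1) by blast
    have DReal: "D \<in> Real (y,y')" unfolding Real_def using DX(1) k(2) by simp
    have "T \<noteq> Real (y,y')" using DReal TR DX(2) by blast
    then have cT: "card T = z" using Ksel(3) unfolding T_def by blast
    have "\<forall>D'\<in>T. realized H B D' x x' p"
    proof
      fix D' assume "D' \<in> T"
      then have "D' \<in> Real (y,y')" using Ksel(1) unfolding T_def by blast
      then have "realized H B D' y y' (rk y y')" unfolding Real_def by simp
      then show "realized H B D' x x' p" using k(3) by blast
    qed
    then have "\<forall>D'\<in>T. \<exists>w\<in>D'. \<exists>w'\<in>D'. {x,w}\<in>edges H \<and> {x',w'}\<in>edges H \<and>
            ((w\<in>B)\<noteq>(w'\<in>B)) = ((v\<in>B)\<noteq>(v'\<in>B))" unfolding realized_def p_def .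
    then show "\<exists>T\<subseteq>R. card T = z \<and> (\<forall>D'\<in>T. \<exists>w\<in>D'. \<exists>w'\<in>D'. {x,w}\<in>edges H \<and> {x',w'}\<in>edges H \<and>
            ((w\<in>B)\<noteq>(w'\<in>B)) = ((v\<in>B)\<noteq>(v'\<in>B)))" using TR cT by blast
  qed
  have oct_ge: "card XC \<le> oct H'"
    unfolding H'_def Dr_def HX_def by (rule oct_part[OF wf XCs octH compz Bp Rsub[unfolded HX_def] cover])
  have wfH': "wf_graph H'" unfolding H'_def by (rule wf_del[OF wf])
  have subH'H: "subgraph H' H" unfolding subgraph_def H'_def using wf_del[OF wf] by auto
  have subH'G: "subgraph H' G" using subH'H subHG unfolding subgraph_def by auto
  have bipH': "bipartite (del_verts H' XC)"
    by (rule bip_mono[OF wfX wf_del[OF wfH']]) (auto simp: H'_def HX_def bipH)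
  have XCH': "XC \<subseteq> verts H'" using XCs DrX unfolding H'_def by auto
  have oct_le': "oct H' \<le> card XC" by (rule oct_le[OF finXC XCH' bipH'])
  have compz': "\<forall>C\<in>components H'. card (XC \<inter> C) \<le> z"
  proof
    fix C assume C: "C \<in> components H'"
    then obtain u where u: "u \<in> verts H'" "C = cp H' u" unfolding components_cp by blast
    have uH: "u \<in> verts H" using u(1) unfolding H'_def by simp
    have sub: "C \<subseteq> cp H u"
    proof
      fix w assume "w \<in> C"
      then have "reachable H' u w" unfolding u(2) cp_def by simp
      then have "reachable H u w" by (rule reach_mono) (auto simp: H'_def)
      then show "w \<in> cp H u" unfolding cp_def by simp
    qed
    have "cp H u \<in> components H" unfolding components_cp using uH by (rule imageI)
    then have "card (XC \<inter> cp H u) \<le> z" using compz by blast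
    moreover have "card (XC \<inter> C) \<le> card (XC \<inter> cp H u)" using sub finXC by (intro card_mono) auto
    ultimately show "card (XC \<inter> C) \<le> z" by simp
  qed
  have count: "card (components (del_verts H' XC)) \<le> z^2 * card XC"
  proof -
    define H'X where "H'X = del_verts H' XC"
    have eH'X: "edges H'X = {e \<in> edges H. e \<inter> Dr = {} \<and> e \<inter> XC = {}}" unfolding H'X_def H'_def by auto
    have vH'X: "verts H'X = verts H - Dr - XC" unfolding H'X_def H'_def by auto
    have sub: "components H'X \<subseteq> R"
    proof
      fix C assume "C \<in> components H'X"
      then obtain u where u: "u \<in> verts H'X" "C = cp H'X u" unfolding components_cp by blast
      have uX: "u \<in> verts HX" using u(1) unfolding vH'X HX_def by simp
      define D where "D = cp HX u"
      have DX: "D \<in> components HX" unfolding D_def components_cp using uX by (rule imageI)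
      have uD: "u \<in> D" unfolding D_def by (rule cp_self[OF uX])
      have DR: "D \<in> R"
      proof (rule ccontr)
        assume "D \<notin> R"
        then have "u \<in> Dr" using DX uD unfolding Dr_def by blast
        then show False using u(1) unfolding vH'X by simp
      qed
      have DDr: "D \<inter> Dr = {}"
      proof -
        have "q \<notin> Dr" if "q \<in> D" for q
        proof
          assume "q \<in> Dr"
          then obtain D'' where "D'' \<in> components HX - R" "q \<in> D''" unfolding Dr_def by blast
          then show False using comp_disj[OF wfX DX, of D'' q] that DR by blast
        qed
        then show ?thesis by blast
      qed
      have "C = D"
      proof
        show "C \<subseteq> D"
        proof
          fix w assume "w \<in> C"
          then have "reachable H'X u w" unfolding u(2) cp_def by simp
          then have "reachable HX u w" by (rule reach_mono) (auto simp: H'X_def H'_def HX_def)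
          then show "w \<in> D" unfolding D_def cp_def by simp
        qed
        show "D \<subseteq> C"
        proof
          fix w assume "w \<in> D"
          then have "(adj HX)\<^sup>*\<^sup>* u w" unfolding D_def cp_def reachable_def by simp
          then have "(adj H'X)\<^sup>*\<^sup>* u w"
          proof (induction rule: rtranclp_induct)
            case base then show ?case by simp
          next
            case (step y z)
            have "(adj HX)\<^sup>*\<^sup>* u z" using step.hyps by (rule rtranclp.rtrancl_into_rtrancl)
            then have "y \<in> D" "z \<in> D" using step.hyps(1) uX unfolding D_def cp_def reachable_def by auto
            then have "{y,z} \<inter> Dr = {}" using DDr by auto
            moreover have "{y,z} \<in> edges HX" using step.hyps(2) unfolding adj_def .
            ultimately have "adj H'X y z" unfolding adj_def eH'X HX_def by auto
            then show ?case using step.IH by simp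
          qed
          then show "w \<in> C" unfolding u(2) cp_def reachable_def using u(1) by simp
        qed
      qed
      then show "C \<in> R" using DR by simp
    qed
    have finR: "finite R" using Rsub finCX finite_subset by blast
    have Ksub: "Keys \<subseteq> Sigma XC (\<lambda>y. XC \<inter> cp H y)" unfolding Keys_def cp_def by auto
    have finK: "finite Keys" using finite_subset[OF Ksub] finXC by simp
    have "card (components H'X) \<le> card R" using sub finR by (rule card_mono[rotated])
    also have "\<dots> \<le> (\<Sum>k\<in>Keys. card (Ksel k))" unfolding R_def by (rule card_UN_le[OF finK])
    also have "\<dots> \<le> (\<Sum>k\<in>Keys. z)" using Ksel(2) by (intro sum_mono) simp
    also have "\<dots> = z * card Keys" by simp
    also have "\<dots> \<le> z * (z * card XC)"
    proof -
      have "card Keys \<le> card (Sigma XC (\<lambda>y. XC \<inter> cp H y))"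
        using Ksub finXC by (intro card_mono) auto
      also have "\<dots> = (\<Sum>y\<in>XC. card (XC \<inter> cp H y))" using finXC by simp
      also have "\<dots> \<le> (\<Sum>y\<in>XC. z)"
      proof (rule sum_mono)
        fix y assume "y \<in> XC"
        then have "cp H y \<in> components H" unfolding components_cp using XCs by blast
        then show "card (XC \<inter> cp H y) \<le> z" using compz by blast
      qed
      also have "\<dots> = z * card XC" by simp
      finally show ?thesis by simp
    qed
    also have "\<dots> = z^2 * card XC" by (simp add: power2_eq_square)
    finally show ?thesis unfolding H'X_def .
  qed
  have "certificate G XC z H'"
    unfolding certificate_def using subH'G bipH' oct_ge oct_le' compz' by simp
  then show ?thesis using subH'H count by blast
qed

end
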